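(* The $\mathbf k$-linear map $\varphi:\mathrm{WCQSym}\to\mathrm{QSym}$, defined by $\varphi(M_\alpha)=(-1)^{\ell_\varepsilon(\alpha)}M_{\bar\alpha}$ if $\alpha\in\mathcal C_N$ and $\varphi(M_\alpha)=0$ if $\alpha\in\mathcal C_\varepsilon$, is an algebra homomorphism.
   Context: $\tilde{\mathbb N}=\mathbb N\cup\{\varepsilon\}$ with $0+\varepsilon=\varepsilon+\varepsilon=\varepsilon$ and $n+\varepsilon=n$ for integers $n\ge1$. $\mathbf{k}$ is a commutative ring containing $\mathbb Q$; $\mathbf{k}[[X]]_{\tilde{\mathbb N}}$, $X=\{x_1<x_2<\cdots\}$, is the algebra of possibly infinite linear combinations of formal monomials $\prod x_i^{f(x_i)}$ with $f$ finitely supported $\tilde{\mathbb N}$-valued, multiplied by adding exponents in $\tilde{\mathbb N}$. An $\tilde{\mathbb N}$-composition is a finite (possibly empty) sequence of elements of $\{\varepsilon,1,2,\dots\}$; $M_{(\alpha_1,\dots,\alpha_k)}=\sum_{1\le i_1<\cdots<i_k}x_{i_1}^{\alpha_1}\cdots x_{i_k}^{\alpha_k}$, $M_\emptyset=1$. $\mathrm{WCQSym}$ is the $\mathbf k$-span of all $M_\alpha$ (a subalgebra with the $M_\alpha$ as basis), and $\mathrm{QSym}$ the span of those with all entries positive integers. $\ell_\varepsilon(\alpha)$ is the number of entries equal to $\varepsilon$, $\bar\alpha$ is $\alpha$ with its $\varepsilon$ entries deleted. $\mathcal C_\varepsilon$ is the set of $\tilde{\mathbb N}$-compositions whose first entry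 is $\varepsilon$, $\mathcal C_N$ the set of all others (including the empty one). *)

theory Defs
  imports Main
begin

datatype ntilde = Eps | Num nat

fun nt_add :: "ntilde \<Rightarrow> ntilde \<Rightarrow> ntilde" where
  "nt_add (Num m) (Num n) = Num (m + n)"
| "nt_add Eps Eps = Eps"
| "nt_add (Num n) Eps = (if n = 0 then Eps else Num n)"
| "nt_add Eps (Num n) = (if n = 0 then Eps else Num n)"

text \<open>Formal monomials: exponent functions on the variables x_0 < x_1 < ... (indexed by nat),
  finitely supported (support = variables with exponent different from Num 0).\<close>
type_synonym monom = "nat \<Rightarrow> ntilde"

definition fin_monom :: "monom \<Rightarrow> bool" where
  "fin_monom a \<longleftrightarrow> finite {i. a i \<noteq> Num 0}"

text \<open>Elements of k[[X]]_Ntilde: coefficient functions on monomials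
  (coefficients of non-finitely supported exponent functions are irrelevant/zero).\<close>
type_synonym 'k series = "monom \<Rightarrow> 'k"

definition ser_mult :: "'k::comm_ring_1 series \<Rightarrow> 'k series \<Rightarrow> 'k series" where
  "ser_mult f g = (\<lambda>m. \<Sum>(a, b) \<in> {(a, b). fin_monom a \<and> fin_monom b \<and> (\<forall>i. nt_add (a i) (b i) = m i)}.
       f a * g b)"

definition ser_add :: "'k::comm_ring_1 series \<Rightarrow> 'k series \<Rightarrow> 'k series" where
  "ser_add f g = (\<lambda>m. f m + g m)"

definition ser_smult :: "'k::comm_ring_1 \<Rightarrow> 'k series \<Rightarrow> 'k series" where
  "ser_smult c f = (\<lambda>m. c * f m)"

definition ser_one :: "'k::comm_ring_1 series" where
  "ser_one = (\<lambda>m. if m = (\<lambda>i. Num 0) then 1 else 0)"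

definition is_comp :: "ntilde list \<Rightarrow> bool" where
  "is_comp \<alpha> \<longleftrightarrow> Num 0 \<notin> set \<alpha>"

definition is_qcomp :: "ntilde list \<Rightarrow> bool" where
  "is_qcomp \<alpha> \<longleftrightarrow> is_comp \<alpha> \<and> Eps \<notin> set \<alpha>"

definition monom_of :: "nat list \<Rightarrow> ntilde list \<Rightarrow> monom" where
  "monom_of is \<alpha> = (\<lambda>j. case map_of (zip is \<alpha>) j of None \<Rightarrow> Num 0 | Some e \<Rightarrow> e)"

definition Mfun :: "ntilde list \<Rightarrow> 'k::comm_ring_1 series" where
  "Mfun \<alpha> = (\<lambda>m. if \<exists>is. length is = length \<alpha> \<and> sorted_wrt (<) is \<and> m = monom_of is \<alpha>
                  then 1 else 0)"

definition lincomb :: "(ntilde list \<Rightarrow> 'k::comm_ring_1) \<Rightarrow> (ntilde list \<Rightarrow> 'k series) \<Rightarrow> 'k series" where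
  "lincomb c B = (\<lambda>m. \<Sum>\<alpha>\<in>{\<alpha>. c \<alpha> \<noteq> 0}. c \<alpha> * B \<alpha> m)"

definition valid_coeffs :: "(ntilde list \<Rightarrow> bool) \<Rightarrow> (ntilde list \<Rightarrow> 'k::comm_ring_1) \<Rightarrow> bool" where
  "valid_coeffs P c \<longleftrightarrow> finite {\<alpha>. c \<alpha> \<noteq> 0} \<and> (\<forall>\<alpha>. c \<alpha> \<noteq> 0 \<longrightarrow> P \<alpha>)"

definition WCQSym :: "'k::comm_ring_1 series set" where
  "WCQSym = {lincomb c Mfun | c. valid_coeffs is_comp c}"

definition QSym :: "'k::comm_ring_1 series set" where
  "QSym = {lincomb c Mfun | c. valid_coeffs is_qcomp c}"

definition eps_len :: "ntilde list \<Rightarrow> nat" where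
  "eps_len \<alpha> = length (filter (\<lambda>x. x = Eps) \<alpha>)"

definition bar :: "ntilde list \<Rightarrow> ntilde list" where
  "bar \<alpha> = filter (\<lambda>x. x \<noteq> Eps) \<alpha>"

definition in_C_eps :: "ntilde list \<Rightarrow> bool" where
  "in_C_eps \<alpha> \<longleftrightarrow> \<alpha> \<noteq> [] \<and> hd \<alpha> = Eps"

definition phiM :: "ntilde list \<Rightarrow> 'k::comm_ring_1 series" where
  "phiM \<alpha> = (if in_C_eps \<alpha> then (\<lambda>m. 0)
             else ser_smult ((-1) ^ eps_len \<alpha>) (Mfun (bar \<alpha>)))"

definition phi :: "'k::comm_ring_1 series \<Rightarrow> 'k series" where
  "phi f = lincomb (SOME c. valid_coeffs is_comp c \<and> f = lincomb c Mfun) phiM"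

end

theory Submission
  imports Defs
begin

lemma nt_add_0l[simp]: "nt_add (Num 0) q = q"
  by (cases q) auto

lemma nt_add_0r[simp]: "nt_add p (Num 0) = p"
  by (cases p) auto

lemma nt_add_zero_iff: "nt_add p q = Num 0 \<longleftrightarrow> p = Num 0 \<and> q = Num 0"
  by (cases p; cases q) auto

definition splits :: "ntilde \<Rightarrow> (ntilde \<times> ntilde) set" where
  "splits x = {(p,q). nt_add p q = x}"

lemma finite_splits: "finite (splits x)"
proof -
  define n where "n = (case x of Num n \<Rightarrow> n | Eps \<Rightarrow> 0)"
  define F where "F = insert Eps (Num ` {..n})"
  have "splits x \<subseteq> F \<times> F"
  proof
    fix pq assume "pq \<in> splits x"
    then obtain p q where pq: "pq = (p,q)" "nt_add p q = x" by (auto simp: splits_def)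
    show "pq \<in> F \<times> F" using pq
      by (cases p; cases q) (auto simp: F_def n_def split: if_splits)
  qed
  moreover have "finite (F \<times> F)" by (simp add: F_def)
  ultimately show ?thesis by (rule finite_subset)
qed

lemma splits_zero: "splits (Num 0) = {(Num 0, Num 0)}"
  by (auto simp: splits_def nt_add_zero_iff)

definition sh :: "(ntilde list \<Rightarrow> 'k::comm_ring_1) \<Rightarrow> ntilde \<Rightarrow> ntilde list \<Rightarrow> 'k" where
  "sh c p = (if p = Num 0 then c else (\<lambda>w. c (p # w)))"

fun CC :: "(ntilde list \<Rightarrow> 'k::comm_ring_1) \<Rightarrow> (ntilde list \<Rightarrow> 'k) \<Rightarrow> ntilde list \<Rightarrow> 'k" where
  "CC A B [] = A [] * B []"
| "CC A B (x # g) = (\<Sum>pq\<in>splits x. CC (sh A (fst pq)) (sh B (snd pq)) g)"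

lemma CC_lin1: "CC (\<lambda>w. \<Sum>i\<in>I. c i * A i w) B g = (\<Sum>i\<in>I. c i * CC (A i) B g)"
proof (induction g arbitrary: A B)
  case Nil
  then show ?case by (simp add: sum_distrib_right mult.assoc)
next
  case (Cons x g)
  have sh: "sh (\<lambda>w. \<Sum>i\<in>I. c i * A i w) p = (\<lambda>w. \<Sum>i\<in>I. c i * sh (A i) p w)" for p
    by (auto simp: sh_def)
  show ?case
    by (simp add: sh Cons.IH sum_distrib_left) (rule sum.swap)
qed

lemma CC_lin2: "CC A (\<lambda>w. \<Sum>i\<in>I. c i * B i w) g = (\<Sum>i\<in>I. c i * CC A (B i) g)"
proof (induction g arbitrary: A B)
  case Nil
  then show ?case by (simp add: sum_distrib_left mult.assoc mult.left_commute)
next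
  case (Cons x g)
  have sh: "sh (\<lambda>w. \<Sum>i\<in>I. c i * B i w) p = (\<lambda>w. \<Sum>i\<in>I. c i * sh (B i) p w)" for p
    by (auto simp: sh_def)
  show ?case
    by (simp add: sh Cons.IH sum_distrib_left) (rule sum.swap)
qed

lemma CC_zero1: "CC (\<lambda>w. 0) B g = 0"
  using CC_lin1[where I="{}" and c="\<lambda>_. 0" and A="\<lambda>_ _. 0" and B=B and g=g] by simp

lemma CC_zero2: "CC A (\<lambda>w. 0) g = 0"
  using CC_lin2[where I="{}" and c="\<lambda>_. 0" and B="\<lambda>_ _. 0" and A=A and g=g] by simp

definition ee :: "ntilde list \<Rightarrow> ntilde list \<Rightarrow> 'k::comm_ring_1" where
  "ee a = (\<lambda>w. if w = a then 1 else 0)"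

lemma sh_ee_Nil: "sh (ee []) p = (if p = Num 0 then ee [] else (\<lambda>w. 0))"
  by (auto simp: sh_def ee_def)

lemma sh_ee_Cons: "sh (ee (a # u)) p = (if p = Num 0 then ee (a#u) else if p = a then ee u else (\<lambda>w. 0))"
  by (auto simp: sh_def ee_def)

lemma CC_Nil1: "is_comp g \<Longrightarrow> CC (ee []) B g = B g"
proof (induction g arbitrary: B)
  case Nil then show ?case by (simp add: ee_def)
next
  case (Cons x g)
  have x0: "x \<noteq> Num 0" and cg: "is_comp g" using Cons.prems by (auto simp: is_comp_def)
  have "CC (ee []) B (x # g) = (\<Sum>pq\<in>splits x. CC (sh (ee []) (fst pq)) (sh B (snd pq)) g)" by simp
  also have "\<dots> = (\<Sum>pq\<in>{(Num 0, x)}. CC (sh (ee []) (fst pq)) (sh B (snd pq)) g)"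
    apply (rule sum.mono_neutral_right)
    using finite_splits apply simp
    apply (auto simp: splits_def)[1]
    apply (auto simp: sh_ee_Nil CC_zero1 splits_def)
    done
  also have "\<dots> = B (x # g)" using Cons.IH[OF cg] x0 by (simp add: sh_ee_Nil sh_def)
  finally show ?case .
qed

lemma CC_Nil2: "is_comp g \<Longrightarrow> CC A (ee []) g = A g"
proof (induction g arbitrary: A)
  case Nil then show ?case by (simp add: ee_def)
next
  case (Cons x g)
  have x0: "x \<noteq> Num 0" and cg: "is_comp g" using Cons.prems by (auto simp: is_comp_def)
  have "CC A (ee []) (x # g) = (\<Sum>pq\<in>splits x. CC (sh A (fst pq)) (sh (ee []) (snd pq)) g)" by simp
  also have "\<dots> = (\<Sum>pq\<in>{(x, Num 0)}. CC (sh A (fst pq)) (sh (ee []) (snd pq)) g)"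
    apply (rule sum.mono_neutral_right)
    using finite_splits apply simp
    apply (auto simp: splits_def)[1]
    apply (auto simp: sh_ee_Nil CC_zero2 splits_def)
    done
  also have "\<dots> = A (x # g)" using Cons.IH[OF cg] x0 by (simp add: sh_ee_Nil sh_def)
  finally show ?case .
qed

lemma CC_Cons_ee:
  assumes a0: "a \<noteq> Num 0" and b0: "b \<noteq> Num 0" and x0: "x \<noteq> Num 0"
  shows "(CC (ee (a#u)) (ee (b#v)) (x#g) :: 'k::comm_ring_1) =
     (if x = a then CC (ee u) (ee (b#v)) g else 0) + (if x = b then CC (ee (a#u)) (ee v) g else 0)
     + (if x = nt_add a b then CC (ee u) (ee v) g else 0)"
proof -
  define G where "G = (\<lambda>pq. CC (sh (ee (a#u)) (fst pq)) (sh (ee (b#v)) (snd pq)) g :: 'k)"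
  define T where "T = {(a, Num 0), (Num 0, b), (a, b)}"
  have "CC (ee (a#u)) (ee (b#v)) (x#g) = sum G (splits x)" by (simp add: G_def)
  also have "\<dots> = sum G (splits x \<inter> T)"
    apply (rule sum.mono_neutral_right)
    using finite_splits apply simp
     apply blast
    using x0 apply (auto simp: G_def T_def sh_ee_Cons CC_zero1 CC_zero2 splits_def)
    done
  also have "\<dots> = (\<Sum>pq\<in>T. if pq \<in> splits x then G pq else 0)"
    by (subst Int_commute) (rule sum.inter_restrict, simp add: T_def)
  also have "\<dots> = (if x = a then CC (ee u) (ee (b#v)) g else 0) + (if x = b then CC (ee (a#u)) (ee v) g else 0)
     + (if x = nt_add a b then CC (ee u) (ee v) g else 0)"
    using a0 b0 by (simp add: T_def splits_def G_def sh_ee_Cons)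
  finally show ?thesis .
qed

definition PP :: "(ntilde list \<Rightarrow> 'k::comm_ring_1) \<Rightarrow> (ntilde list \<Rightarrow> 'k) \<Rightarrow> ntilde list \<Rightarrow> 'k" where
  "PP A B g = (if is_comp g then CC A B g else 0)"

definition QQ :: "ntilde list \<Rightarrow> ntilde list \<Rightarrow> ntilde list \<Rightarrow> 'k::comm_ring_1" where
  "QQ a b = PP (ee a) (ee b)"

definition pre :: "ntilde \<Rightarrow> (ntilde list \<Rightarrow> 'k::comm_ring_1) \<Rightarrow> ntilde list \<Rightarrow> 'k" where
  "pre x F w = (case w of [] \<Rightarrow> 0 | y # w' \<Rightarrow> if y = x then F w' else 0)"

lemma pre_simps[simp]: "pre x F [] = 0" "pre x F (y # w) = (if y = x then F w else 0)"
  by (simp_all add: pre_def)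

lemma QQ_Nil1: "is_comp b \<Longrightarrow> QQ [] b = ee b"
proof (rule ext)
  fix g assume "is_comp b"
  show "QQ [] b g = ee b g"
    apply (cases "is_comp g")
     apply (simp add: QQ_def PP_def CC_Nil1)
    using \<open>is_comp b\<close> apply (auto simp: QQ_def PP_def ee_def)
    done
qed

lemma QQ_Nil2: "is_comp a \<Longrightarrow> QQ a [] = ee a"
proof (rule ext)
  fix g assume "is_comp a"
  show "QQ a [] g = ee a g"
    apply (cases "is_comp g")
     apply (simp add: QQ_def PP_def CC_Nil2)
    using \<open>is_comp a\<close> apply (auto simp: QQ_def PP_def ee_def)
    done
qed

lemma is_comp_Cons: "is_comp (x # w) \<longleftrightarrow> x \<noteq> Num 0 \<and> is_comp w"
  by (auto simp: is_comp_def)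

lemma QQ_Cons:
  assumes "is_comp (a#u)" "is_comp (b#v)"
  shows "QQ (a#u) (b#v) = (\<lambda>g. pre a (QQ u (b#v)) g + pre b (QQ (a#u) v) g + pre (nt_add a b) (QQ u v) g)"
proof (rule ext)
  fix g
  have a0: "a \<noteq> Num 0" and b0: "b \<noteq> Num 0" using assms by (auto simp: is_comp_def)
  have ab0: "nt_add a b \<noteq> Num 0" using a0 by (simp add: nt_add_zero_iff)
  show "QQ (a#u) (b#v) g = pre a (QQ u (b#v)) g + pre b (QQ (a#u) v) g + pre (nt_add a b) (QQ u v) g"
  proof (cases g)
    case Nil then show ?thesis by (simp add: QQ_def PP_def ee_def is_comp_def)
  next
    case (Cons x g')
    show ?thesis
    proof (cases "is_comp g")
      case True
      then have x0: "x \<noteq> Num 0" and c': "is_comp g'" using Cons by (auto simp: is_comp_Cons)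
      show ?thesis using True c' Cons by (simp add: QQ_def PP_def CC_Cons_ee[OF a0 b0 x0] del: CC.simps)
    next
      case False
      then show ?thesis using Cons a0 b0 ab0 by (auto simp: QQ_def PP_def is_comp_Cons)
    qed
  qed
qed

definition supp :: "(ntilde list \<Rightarrow> 'k::comm_ring_1) \<Rightarrow> ntilde list set" where
  "supp F = {w. F w \<noteq> 0}"

lemma supp_pre: "supp (pre x F) = Cons x ` supp F"
proof (rule set_eqI)
  fix w show "w \<in> supp (pre x F) \<longleftrightarrow> w \<in> Cons x ` supp F"
    by (cases w) (auto simp: supp_def)
qed

lemma supp_ee: "supp (ee a :: _ \<Rightarrow> 'k::comm_ring_1) = {a}"
  by (auto simp: supp_def ee_def)

lemma supp_add: "supp (\<lambda>g. F g + G g) \<subseteq> supp F \<union> supp G"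
  unfolding supp_def by (rule subsetI) (rule ccontr, simp)

lemma supp_add3: "supp (\<lambda>g. F g + G g + H g) \<subseteq> supp F \<union> supp G \<union> supp H"
  unfolding supp_def by (rule subsetI) (rule ccontr, simp)

lemma finite_supp_QQ: "is_comp a \<Longrightarrow> is_comp b \<Longrightarrow> finite (supp (QQ a b :: _ \<Rightarrow> 'k::comm_ring_1))"
proof (induction "length a + length b" arbitrary: a b rule: less_induct)
  case less
  show ?case
  proof (cases a)
    case Nil then show ?thesis using less.prems by (simp add: QQ_Nil1 supp_ee)
  next
    case (Cons x u)
    show ?thesis
    proof (cases b)
      case Nil then show ?thesis using less.prems by (simp add: QQ_Nil2 supp_ee)
    next
      case (Cons y v)
      have cu: "is_comp u" and cv: "is_comp v" using less.prems \<open>a = x#u\<close> Cons by (auto simp: is_comp_Cons)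
      have f1: "finite (supp (QQ u b :: _ \<Rightarrow> 'k))" using less.hyps[of u b] cu less.prems \<open>a = x#u\<close> by simp
      have f2: "finite (supp (QQ a v :: _ \<Rightarrow> 'k))" using less.hyps[of a v] cv less.prems Cons by simp
      have f3: "finite (supp (QQ u v :: _ \<Rightarrow> 'k))" using less.hyps[of u v] cu cv \<open>a = x#u\<close> Cons by simp
      have "supp (QQ a b :: _ \<Rightarrow> 'k) \<subseteq> supp (pre x (QQ u b) :: _ \<Rightarrow> 'k) \<union> supp (pre y (QQ a v) :: _ \<Rightarrow> 'k) \<union> supp (pre (nt_add x y) (QQ u v) :: _ \<Rightarrow> 'k)"
        using less.prems \<open>a = x#u\<close> Cons by (simp add: QQ_Cons) (rule supp_add3)
      then show ?thesis using f1 f2 f3 by (auto simp: supp_pre intro: finite_subset)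
    qed
  qed
qed

definition phic :: "ntilde list \<Rightarrow> ntilde list \<Rightarrow> 'k::comm_ring_1" where
  "phic a d = (if \<not> in_C_eps a \<and> bar a = d then (-1) ^ eps_len a else 0)"

definition psic :: "ntilde list \<Rightarrow> ntilde list \<Rightarrow> 'k::comm_ring_1" where
  "psic a d = (if bar a = d then (-1) ^ eps_len a else 0)"

definition Phi :: "(ntilde list \<Rightarrow> 'k::comm_ring_1) \<Rightarrow> ntilde list \<Rightarrow> 'k" where
  "Phi F d = (\<Sum>a\<in>supp F. F a * phic a d)"

definition Psi :: "(ntilde list \<Rightarrow> 'k::comm_ring_1) \<Rightarrow> ntilde list \<Rightarrow> 'k" where
  "Psi F d = (\<Sum>a\<in>supp F. F a * psic a d)"

lemma Phi_superset: "finite S \<Longrightarrow> supp F \<subseteq> S \<Longrightarrow> Phi F d = (\<Sum>a\<in>S. F a * phic a d)"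
  unfolding Phi_def by (rule sum.mono_neutral_left) (auto simp: supp_def)

lemma Psi_superset: "finite S \<Longrightarrow> supp F \<subseteq> S \<Longrightarrow> Psi F d = (\<Sum>a\<in>S. F a * psic a d)"
  unfolding Psi_def by (rule sum.mono_neutral_left) (auto simp: supp_def)

lemma Phi_lin:
  assumes "finite I" "\<And>i. i \<in> I \<Longrightarrow> finite (supp (F i))"
  shows "Phi (\<lambda>w. \<Sum>i\<in>I. c i * F i w) d = (\<Sum>i\<in>I. c i * Phi (F i) d)"
proof -
  define S where "S = (\<Union>i\<in>I. supp (F i))"
  have fS: "finite S" using assms by (simp add: S_def)
  have "supp (\<lambda>w. \<Sum>i\<in>I. c i * F i w) \<subseteq> S"
    unfolding S_def supp_def by (auto intro: ccontr)
  then have "Phi (\<lambda>w. \<Sum>i\<in>I. c i * F i w) d = (\<Sum>a\<in>S. (\<Sum>i\<in>I. c i * F i a) * phic a d)"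
    by (rule Phi_superset[OF fS])
  also have "\<dots> = (\<Sum>i\<in>I. c i * (\<Sum>a\<in>S. F i a * phic a d))"
    by (simp add: sum_distrib_right sum_distrib_left mult.assoc) (rule sum.swap)
  also have "\<dots> = (\<Sum>i\<in>I. c i * Phi (F i) d)"
    by (rule sum.cong[OF refl]) (simp add: Phi_superset[OF fS] S_def, subst Phi_superset[OF fS], auto simp: S_def)
  finally show ?thesis .
qed

lemma Psi_add:
  assumes "finite (supp F)" "finite (supp G)"
  shows "Psi (\<lambda>w. F w + G w) d = Psi F d + Psi G d"
proof -
  define S where "S = supp F \<union> supp G"
  have fS: "finite S" using assms by (simp add: S_def)
  have "Psi (\<lambda>w. F w + G w) d = (\<Sum>a\<in>S. (F a + G a) * psic a d)"
    using fS supp_add[of F G] by (intro Psi_superset) (auto simp: S_def)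
  also have "\<dots> = Psi F d + Psi G d"
    using fS by (simp add: distrib_right sum.distrib Psi_superset[of S] S_def)
  finally show ?thesis .
qed

lemma Phi_add:
  assumes "finite (supp F)" "finite (supp G)"
  shows "Phi (\<lambda>w. F w + G w) d = Phi F d + Phi G d"
proof -
  define S where "S = supp F \<union> supp G"
  have fS: "finite S" using assms by (simp add: S_def)
  have "Phi (\<lambda>w. F w + G w) d = (\<Sum>a\<in>S. (F a + G a) * phic a d)"
    using fS supp_add[of F G] by (intro Phi_superset) (auto simp: S_def)
  also have "\<dots> = Phi F d + Phi G d"
    using fS by (simp add: distrib_right sum.distrib Phi_superset[of S] S_def)
  finally show ?thesis .
qed

lemma finite_supp_pre: "finite (supp F) \<Longrightarrow> finite (supp (pre x F))"
  by (simp add: supp_pre)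

lemma bar_Cons: "bar (x # w) = (if x = Eps then bar w else x # bar w)"
  by (simp add: bar_def)

lemma eps_len_Cons: "eps_len (x # w) = (if x = Eps then Suc (eps_len w) else eps_len w)"
  by (simp add: eps_len_def)

lemma in_C_eps_Cons: "in_C_eps (x # w) \<longleftrightarrow> x = Eps"
  by (simp add: in_C_eps_def)

lemma psic_Cons: "psic (x # g) d = (if x = Eps then - psic g d else pre x (psic g) d)"
  by (cases d) (auto simp: psic_def bar_Cons eps_len_Cons)

lemma phic_Cons: "phic (x # g) d = (if x = Eps then 0 else pre x (psic g) d)"
  by (cases d) (auto simp: psic_def phic_def bar_Cons eps_len_Cons in_C_eps_Cons)

lemma Psi_pre: "Psi (pre x F) d = (if x = Eps then - Psi F d else pre x (Psi F) d)"
proof -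
  have "Psi (pre x F) d = (\<Sum>g\<in>supp F. F g * psic (x # g) d)"
    unfolding Psi_def supp_pre by (subst sum.reindex) (auto simp: inj_on_def)
  then show ?thesis
    by (cases d) (auto simp: psic_Cons Psi_def sum_negf sum_distrib_left)
qed

lemma Phi_pre: "Phi (pre x F) d = (if x = Eps then 0 else pre x (Psi F) d)"
proof -
  have "Phi (pre x F) d = (\<Sum>g\<in>supp F. F g * phic (x # g) d)"
    unfolding Phi_def supp_pre by (subst sum.reindex) (auto simp: inj_on_def)
  then show ?thesis
    by (cases d) (auto simp: phic_Cons psic_Cons Psi_def)
qed

lemma Psi_ee: "Psi (ee a) d = psic a d"
  by (simp add: Psi_def supp_ee) (simp add: ee_def)

lemma Phi_ee: "Phi (ee a) d = phic a d"
  by (simp add: Phi_def supp_ee) (simp add: ee_def)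

lemma Psi_add3:
  assumes "finite (supp F)" "finite (supp G)" "finite (supp H)"
  shows "Psi (\<lambda>w. F w + G w + H w) d = Psi F d + Psi G d + Psi H d"
proof -
  have "finite (supp (\<lambda>w. F w + G w))" using assms supp_add[of F G] by (auto intro: finite_subset)
  then show ?thesis using Psi_add[of "\<lambda>w. F w + G w" H d] Psi_add[of F G d] assms by simp
qed

lemma Phi_add3:
  assumes "finite (supp F)" "finite (supp G)" "finite (supp H)"
  shows "Phi (\<lambda>w. F w + G w + H w) d = Phi F d + Phi G d + Phi H d"
proof -
  have "finite (supp (\<lambda>w. F w + G w))" using assms supp_add[of F G] by (auto intro: finite_subset)
  then show ?thesis using Phi_add[of "\<lambda>w. F w + G w" H d] Phi_add[of F G d] assms by simp
qed

lemma is_comp_bar: "is_comp a \<Longrightarrow> is_comp (bar a)"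
  by (auto simp: is_comp_def bar_def)

lemma nt_add_Eps_l: "y \<noteq> Num 0 \<Longrightarrow> nt_add Eps y = y"
  by (cases y) auto

lemma nt_add_Eps_r: "x \<noteq> Num 0 \<Longrightarrow> nt_add x Eps = x"
  by (cases x) auto

lemma nt_add_ne_Eps: "x \<noteq> Num 0 \<Longrightarrow> x \<noteq> Eps \<Longrightarrow> y \<noteq> Eps \<Longrightarrow> nt_add x y \<noteq> Eps"
  by (cases x; cases y) auto

lemma core:
  assumes "is_comp a" "is_comp b"
  shows "Psi (QQ a b) = (\<lambda>d. ((-1)^(eps_len a + eps_len b) * QQ (bar a) (bar b) d :: 'k::comm_ring_1))
       \<and> Phi (QQ a b) = (\<lambda>d. ((if \<not> in_C_eps a \<and> \<not> in_C_eps b then (-1)^(eps_len a + eps_len b) else 0)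
              * QQ (bar a) (bar b) d :: 'k))"
  using assms
proof (induction "length a + length b" arbitrary: a b rule: less_induct)
  case less
  show ?case
  proof (cases a)
    case Nil
    have cb: "is_comp (bar b)" using less.prems is_comp_bar by blast
    show ?thesis
    proof (intro conjI ext)
      fix d
      show "Psi (QQ a b) d = (-1)^(eps_len a + eps_len b) * (QQ (bar a) (bar b) d :: 'k)"
        unfolding Nil QQ_Nil1[OF less.prems(2)] Psi_ee
        by (simp add: bar_def[of "[]"] eps_len_def[of "[]"] QQ_Nil1[OF cb]) (simp add: psic_def ee_def)
      show "Phi (QQ a b) d = (if \<not> in_C_eps a \<and> \<not> in_C_eps b then (-1)^(eps_len a + eps_len b) else 0) * (QQ (bar a) (bar b) d :: 'k)"
        unfolding Nil QQ_Nil1[OF less.prems(2)] Phi_ee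
        by (simp add: bar_def[of "[]"] eps_len_def[of "[]"] QQ_Nil1[OF cb] in_C_eps_def[of "[]"]) (simp add: phic_def ee_def)
    qed
  next
    case (Cons x u)
    show ?thesis
    proof (cases b)
      case Nil
      have ca: "is_comp (bar a)" using less.prems is_comp_bar by blast
      show ?thesis
      proof (intro conjI ext)
        fix d
        show "Psi (QQ a b) d = (-1)^(eps_len a + eps_len b) * (QQ (bar a) (bar b) d :: 'k)"
          unfolding Nil QQ_Nil2[OF less.prems(1)] Psi_ee
          by (simp add: bar_def[of "[]"] eps_len_def[of "[]"] QQ_Nil2[OF ca]) (simp add: psic_def ee_def)
        show "Phi (QQ a b) d = (if \<not> in_C_eps a \<and> \<not> in_C_eps b then (-1)^(eps_len a + eps_len b) else 0) * (QQ (bar a) (bar b) d :: 'k)"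
          unfolding Nil QQ_Nil2[OF less.prems(1)] Phi_ee
          by (simp add: bar_def[of "[]"] eps_len_def[of "[]"] QQ_Nil2[OF ca] in_C_eps_def[of "[]"]) (simp add: phic_def ee_def)
      qed
    next
      case (Cons y v)
      note a = \<open>a = x # u\<close> and b = \<open>b = y # v\<close>
      have cu: "is_comp u" and cv: "is_comp v" and x0: "x \<noteq> Num 0" and y0: "y \<noteq> Num 0"
        using less.prems a b by (auto simp: is_comp_Cons)
      have cbu: "is_comp (bar u)" and cbv: "is_comp (bar v)" using cu cv is_comp_bar by blast+
      define X where "X = (QQ u b :: _ \<Rightarrow> 'k)"
      define Y where "Y = (QQ a v :: _ \<Rightarrow> 'k)"
      define Z where "Z = (QQ u v :: _ \<Rightarrow> 'k)"
      have fX: "finite (supp X)" "finite (supp Y)" "finite (supp Z)"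
        unfolding X_def Y_def Z_def using finite_supp_QQ cu cv less.prems by blast+
      have QQab: "QQ a b = (\<lambda>g. pre x X g + pre y Y g + pre (nt_add x y) Z g)"
        unfolding X_def Y_def Z_def a b using less.prems a b by (simp add: QQ_Cons)
      have IHX: "Psi X = (\<lambda>d. (-1)^(eps_len u + eps_len b) * QQ (bar u) (bar b) d)"
        using less.hyps[of u b] cu less.prems a unfolding X_def by simp
      have IHY: "Psi Y = (\<lambda>d. (-1)^(eps_len a + eps_len v) * QQ (bar a) (bar v) d)"
        using less.hyps[of a v] cv less.prems b unfolding Y_def by simp
      have IHZ: "Psi Z = (\<lambda>d. (-1)^(eps_len u + eps_len v) * QQ (bar u) (bar v) d)"
        using less.hyps[of u v] cu cv a b unfolding Z_def by simp
      have Psi_ab: "Psi (QQ a b) d = Psi (pre x X) d + Psi (pre y Y) d + Psi (pre (nt_add x y) Z) d" for d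
        unfolding QQab by (rule Psi_add3) (simp_all add: finite_supp_pre fX)
      have Phi_ab: "Phi (QQ a b) d = Phi (pre x X) d + Phi (pre y Y) d + Phi (pre (nt_add x y) Z) d" for d
        unfolding QQab by (rule Phi_add3) (simp_all add: finite_supp_pre fX)
      show ?thesis
      proof (cases "x = Eps")
        case xE: True
        show ?thesis
        proof (cases "y = Eps")
          case yE: True
          have ab: "nt_add x y = Eps" using xE yE by simp
          show ?thesis
          proof (intro conjI ext)
            fix d
            have "Psi (QQ a b) d = - Psi X d - Psi Y d - Psi Z d"
              using Psi_ab[of d] xE yE ab by (simp add: Psi_pre)
            then show "Psi (QQ a b) d = (-1)^(eps_len a + eps_len b) * (QQ (bar a) (bar b) d :: 'k)"
              using xE yE a b IHX IHY IHZ
              by (simp add: bar_Cons eps_len_Cons algebra_simps)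
            show "Phi (QQ a b) d = (if \<not> in_C_eps a \<and> \<not> in_C_eps b then (-1)^(eps_len a + eps_len b) else 0) * (QQ (bar a) (bar b) d :: 'k)"
              unfolding Phi_ab Phi_pre using xE yE ab a b by (simp add: in_C_eps_Cons)
          qed
        next
          case yN: False
          have ab: "nt_add x y = y" using xE y0 by (simp add: nt_add_Eps_l)
          show ?thesis
          proof (intro conjI ext)
            fix d
            show "Psi (QQ a b) d = (-1)^(eps_len a + eps_len b) * (QQ (bar a) (bar b) d :: 'k)"
              unfolding Psi_ab Psi_pre using xE yN ab a b IHX IHY IHZ
              by (cases d) (simp_all add: bar_Cons eps_len_Cons algebra_simps)
            show "Phi (QQ a b) d = (if \<not> in_C_eps a \<and> \<not> in_C_eps b then (-1)^(eps_len a + eps_len b) else 0) * (QQ (bar a) (bar b) d :: 'k)"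
              unfolding Phi_ab Phi_pre using xE yN ab a b IHX IHY IHZ
              by (cases d) (simp_all add: in_C_eps_Cons bar_Cons eps_len_Cons algebra_simps)
          qed
        qed
      next
        case xN: False
        show ?thesis
        proof (cases "y = Eps")
          case yE: True
          have ab: "nt_add x y = x" using yE x0 by (simp add: nt_add_Eps_r)
          show ?thesis
          proof (intro conjI ext)
            fix d
            show "Psi (QQ a b) d = (-1)^(eps_len a + eps_len b) * (QQ (bar a) (bar b) d :: 'k)"
              unfolding Psi_ab Psi_pre using xN yE ab a b IHX IHY IHZ
              by (cases d) (simp_all add: bar_Cons eps_len_Cons algebra_simps)
            show "Phi (QQ a b) d = (if \<not> in_C_eps a \<and> \<not> in_C_eps b then (-1)^(eps_len a + eps_len b) else 0) * (QQ (bar a) (bar b) d :: 'k)"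
              unfolding Phi_ab Phi_pre using xN yE ab a b IHX IHY IHZ
              by (cases d) (simp_all add: in_C_eps_Cons bar_Cons eps_len_Cons algebra_simps)
          qed
        next
          case yN: False
          have abN: "nt_add x y \<noteq> Eps" using x0 xN yN by (rule nt_add_ne_Eps)
          have cxu: "is_comp (x # bar u)" and cyv: "is_comp (y # bar v)"
            using x0 y0 cbu cbv by (simp_all add: is_comp_Cons)
          have RHS: "QQ (bar a) (bar b) = (\<lambda>g. pre x (QQ (bar u) (y # bar v)) g + pre y (QQ (x # bar u) (bar v)) g
               + pre (nt_add x y) (QQ (bar u) (bar v)) g)"
            using xN yN a b QQ_Cons[OF cxu cyv] by (simp add: bar_Cons)
          show ?thesis
          proof (intro conjI ext)
            fix d
            show "Psi (QQ a b) d = (-1)^(eps_len a + eps_len b) * (QQ (bar a) (bar b) d :: 'k)"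
              unfolding Psi_ab Psi_pre RHS using xN yN abN a b IHX IHY IHZ
              by (cases d) (simp_all add: bar_Cons eps_len_Cons algebra_simps)
            show "Phi (QQ a b) d = (if \<not> in_C_eps a \<and> \<not> in_C_eps b then (-1)^(eps_len a + eps_len b) else 0) * (QQ (bar a) (bar b) d :: 'k)"
              unfolding Phi_ab Phi_pre RHS using xN yN abN a b IHX IHY IHZ
              by (cases d) (simp_all add: in_C_eps_Cons bar_Cons eps_len_Cons algebra_simps)
          qed
        qed
      qed
    qed
  qed
qed

lemma ee_expand: "finite (supp A) \<Longrightarrow> (\<lambda>w. \<Sum>a\<in>supp A. A a * ee a w) = A"
proof (rule ext)
  fix w assume f: "finite (supp A)"
  have "(\<Sum>a\<in>supp A. A a * ee a w) = (\<Sum>a\<in>supp A. if a = w then A a else 0)"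
    by (rule sum.cong) (auto simp: ee_def)
  also have "\<dots> = A w" using f by (simp add: sum.delta' supp_def)
  finally show "(\<Sum>a\<in>supp A. A a * ee a w) = A w" .
qed

lemma CC_expand:
  assumes "finite (supp A)" "finite (supp B)"
  shows "CC A B g = (\<Sum>a\<in>supp A. A a * (\<Sum>b\<in>supp B. B b * CC (ee a) (ee b) g))"
proof -
  have "CC A B g = CC (\<lambda>w. \<Sum>a\<in>supp A. A a * ee a w) (\<lambda>w. \<Sum>b\<in>supp B. B b * ee b w) g"
    using assms by (simp add: ee_expand)
  also have "\<dots> = (\<Sum>a\<in>supp A. A a * (\<Sum>b\<in>supp B. B b * CC (ee a) (ee b) g))"
    by (simp add: CC_lin1 CC_lin2)
  finally show ?thesis .
qed

lemma valid_supp: "valid_coeffs is_comp c \<longleftrightarrow> finite (supp c) \<and> (\<forall>a\<in>supp c. is_comp a)"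
  by (auto simp: valid_coeffs_def supp_def)

lemma PP_expand:
  assumes "valid_coeffs is_comp A" "valid_coeffs is_comp B"
  shows "PP A B = (\<lambda>g. \<Sum>a\<in>supp A. A a * (\<Sum>b\<in>supp B. B b * QQ a b g))"
proof (rule ext)
  fix g
  have f: "finite (supp A)" "finite (supp B)" using assms by (auto simp: valid_supp)
  show "PP A B g = (\<Sum>a\<in>supp A. A a * (\<Sum>b\<in>supp B. B b * QQ a b g))"
    by (cases "is_comp g") (simp_all add: PP_def QQ_def CC_expand[OF f])
qed

lemma finite_supp_sum:
  assumes "finite I" "\<And>i. i \<in> I \<Longrightarrow> finite (supp (F i))"
  shows "finite (supp (\<lambda>w. \<Sum>i\<in>I. c i * F i w))"
proof -
  have "supp (\<lambda>w. \<Sum>i\<in>I. c i * F i w) \<subseteq> (\<Union>i\<in>I. supp (F i))"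
    unfolding supp_def by (auto intro: ccontr)
  then show ?thesis using assms by (auto intro: finite_subset)
qed

lemma finite_supp_PP:
  assumes "valid_coeffs is_comp A" "valid_coeffs is_comp B"
  shows "finite (supp (PP A B))"
  unfolding PP_expand[OF assms] using assms
  by (intro finite_supp_sum finite_supp_QQ) (auto simp: valid_supp)

lemma valid_PP:
  assumes "valid_coeffs is_comp A" "valid_coeffs is_comp B"
  shows "valid_coeffs is_comp (PP A B)"
  using finite_supp_PP[OF assms] by (auto simp: valid_supp supp_def PP_def)

definition sg :: "ntilde list \<Rightarrow> 'k::comm_ring_1" where
  "sg a = (if \<not> in_C_eps a then (-1) ^ eps_len a else 0)"

lemma phic_ee: "phic a w = sg a * ee (bar a) w"
  by (auto simp: phic_def sg_def ee_def)

lemma Phi_expand: "Phi A = (\<lambda>w. \<Sum>a\<in>supp A. (A a * sg a) * ee (bar a) w)"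
  by (rule ext) (simp add: Phi_def phic_ee mult.assoc)

lemma finite_supp_Phi: "finite (supp A) \<Longrightarrow> finite (supp (Phi A))"
  unfolding Phi_expand by (rule finite_supp_sum) (auto simp: supp_ee)

lemma Phi_QQ:
  assumes "is_comp a" "is_comp b"
  shows "Phi (QQ a b) d = sg a * sg b * (QQ (bar a) (bar b) d :: 'k::comm_ring_1)"
proof -
  have "Phi (QQ a b) = (\<lambda>d. ((if \<not> in_C_eps a \<and> \<not> in_C_eps b then (-1)^(eps_len a + eps_len b) else 0)
              * QQ (bar a) (bar b) d :: 'k))" using core[OF assms] by blast
  then show ?thesis by (simp add: sg_def power_add)
qed

lemma Phi_mult:
  assumes vA: "valid_coeffs is_comp A" and vB: "valid_coeffs is_comp B"
  shows "Phi (PP A B) = PP (Phi A) (Phi B)"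
proof (rule ext)
  fix d
  have f: "finite (supp A)" "finite (supp B)" and cA: "\<And>a. a \<in> supp A \<Longrightarrow> is_comp a"
    and cB: "\<And>a. a \<in> supp B \<Longrightarrow> is_comp a" using vA vB by (auto simp: valid_supp)
  have fin2: "finite (supp (\<lambda>g. \<Sum>b\<in>supp B. B b * QQ a b g))" if "a \<in> supp A" for a
    using that f cA cB by (intro finite_supp_sum finite_supp_QQ) auto
  have "Phi (PP A B) d = (\<Sum>a\<in>supp A. A a * Phi (\<lambda>g. \<Sum>b\<in>supp B. B b * QQ a b g) d)"
    unfolding PP_expand[OF vA vB] using f fin2 by (intro Phi_lin) auto
  also have "\<dots> = (\<Sum>a\<in>supp A. A a * (\<Sum>b\<in>supp B. B b * Phi (QQ a b) d))"
    using f cA cB finite_supp_QQ by (intro sum.cong refl arg_cong2[where f="(*)"] Phi_lin) auto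
  also have "\<dots> = (\<Sum>a\<in>supp A. A a * (\<Sum>b\<in>supp B. B b * (sg a * sg b * QQ (bar a) (bar b) d)))"
    using cA cB by (intro sum.cong refl arg_cong2[where f="(*)"]) (auto simp: Phi_QQ)
  also have "\<dots> = PP (Phi A) (Phi B) d"
  proof (cases "is_comp d")
    case True
    have fa: "finite (supp (Phi A))" "finite (supp (Phi B))" using f by (simp_all add: finite_supp_Phi)
    have "PP (Phi A) (Phi B) d = CC (\<lambda>w. \<Sum>a\<in>supp A. (A a * sg a) * ee (bar a) w)
                                  (\<lambda>w. \<Sum>b\<in>supp B. (B b * sg b) * ee (bar b) w) d"
      using True by (simp add: PP_def Phi_expand)
    also have "\<dots> = (\<Sum>a\<in>supp A. (A a * sg a) * (\<Sum>b\<in>supp B. (B b * sg b) * CC (ee (bar a)) (ee (bar b)) d))"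
      by (simp add: CC_lin1 CC_lin2)
    finally show ?thesis using True
      by (simp add: QQ_def PP_def sum_distrib_left algebra_simps)
  next
    case False
    then show ?thesis by (simp add: QQ_def PP_def)
  qed
  finally show "Phi (PP A B) d = PP (Phi A) (Phi B) d" .
qed

definition mcons :: "ntilde \<Rightarrow> monom \<Rightarrow> monom" where
  "mcons x m = (\<lambda>i. case i of 0 \<Rightarrow> x | Suc j \<Rightarrow> m j)"

definition zm :: monom where "zm = (\<lambda>_. Num 0)"

lemma mcons_0[simp]: "mcons x m 0 = x" and mcons_Suc[simp]: "mcons x m (Suc j) = m j"
  by (simp_all add: mcons_def)

lemma mcons_decomp: "m = mcons (m 0) (\<lambda>j. m (Suc j))"
  by (rule ext) (simp add: mcons_def split: nat.split)

lemma mcons_inj: "mcons x m = mcons y m' \<longleftrightarrow> x = y \<and> m = m'"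
proof
  assume h: "mcons x m = mcons y m'"
  have "x = y" using fun_cong[OF h, of 0] by simp
  moreover have "m = m'" using fun_cong[OF h, of "Suc _"] by (intro ext) simp
  ultimately show "x = y \<and> m = m'" ..
qed simp

lemma map_of_zip_Suc:
  "map_of (zip (map Suc ix) a) (Suc j) = map_of (zip ix a) j"
  "map_of (zip (map Suc ix) a) 0 = None"
proof (induction ix arbitrary: a)
  case Nil
  { case 1 show ?case by simp }
  { case 2 show ?case by simp }
next
  case (Cons i ix)
  { case 1 show ?case using Cons by (cases a) auto }
  { case 2 show ?case using Cons by (cases a) auto }
qed

lemma monom_of_Suc: "monom_of (map Suc ix) a = mcons (Num 0) (monom_of ix a)"
  by (rule ext) (simp add: monom_of_def mcons_def map_of_zip_Suc split: nat.split)

lemma monom_of_0Suc: "monom_of (0 # map Suc ix) (x # a) = mcons x (monom_of ix a)"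
  by (rule ext) (simp add: monom_of_def mcons_def map_of_zip_Suc split: nat.split)

lemma sorted_pos_decomp:
  assumes "sorted_wrt (<) l" "\<forall>k\<in>set l. k > 0"
  shows "\<exists>l'. l = map Suc l' \<and> sorted_wrt (<) l'"
proof -
  have "l = map Suc (map (\<lambda>k. k - 1) l)" using assms(2) by (induction l) auto
  moreover have "sorted_wrt (<) (map (\<lambda>k. k - 1) l)"
    using assms by (auto simp: sorted_wrt_map elim!: sorted_wrt_mono_rel[rotated])
  ultimately show ?thesis by blast
qed

lemma sorted_decomp:
  assumes "sorted_wrt (<) (l::nat list)"
  shows "(\<exists>l'. l = map Suc l' \<and> sorted_wrt (<) l') \<or> (\<exists>l'. l = 0 # map Suc l' \<and> sorted_wrt (<) l')"
proof (cases l)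
  case Nil then show ?thesis by simp
next
  case (Cons i r)
  have sr: "sorted_wrt (<) r" and gr: "\<forall>k\<in>set r. i < k" using assms Cons by auto
  show ?thesis
  proof (cases "i = 0")
    case True
    then obtain r' where "r = map Suc r'" "sorted_wrt (<) r'" using sorted_pos_decomp[OF sr] gr by auto
    then show ?thesis using Cons True by blast
  next
    case False
    have "\<forall>k\<in>set l. k > 0" using Cons False gr by auto
    then show ?thesis using sorted_pos_decomp[OF assms] by blast
  qed
qed

definition exM :: "ntilde list \<Rightarrow> monom \<Rightarrow> bool" where
  "exM a m \<longleftrightarrow> (\<exists>ix. length ix = length a \<and> sorted_wrt (<) ix \<and> m = monom_of ix a)"

lemma Mfun_exM: "Mfun a m = (if exM a m then 1 else 0)"
  by (simp add: Mfun_def exM_def)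

lemma exM_mcons:
  assumes "is_comp a"
  shows "exM a (mcons x m) \<longleftrightarrow> (if x = Num 0 then exM a m else (case a of [] \<Rightarrow> False | b # a' \<Rightarrow> b = x \<and> exM a' m))"
proof
  assume "exM a (mcons x m)"
  then obtain ix where l: "length ix = length a" and s: "sorted_wrt (<) ix" and m: "mcons x m = monom_of ix a"
    by (auto simp: exM_def)
  from sorted_decomp[OF s] show "(if x = Num 0 then exM a m else (case a of [] \<Rightarrow> False | b # a' \<Rightarrow> b = x \<and> exM a' m))"
  proof
    assume "\<exists>l'. ix = map Suc l' \<and> sorted_wrt (<) l'"
    then obtain l' where "ix = map Suc l'" "sorted_wrt (<) l'" by blast
    then show ?thesis using m l by (auto simp: monom_of_Suc mcons_inj exM_def)
  next
    assume "\<exists>l'. ix = 0 # map Suc l' \<and> sorted_wrt (<) l'"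
    then obtain l' where ix: "ix = 0 # map Suc l'" "sorted_wrt (<) l'" by blast
    then obtain b a' where a: "a = b # a'" using l by (cases a) auto
    have "b \<noteq> Num 0" using assms a by (simp add: is_comp_Cons)
    then show ?thesis using m l ix a by (auto simp: monom_of_0Suc mcons_inj exM_def)
  qed
next
  assume h: "(if x = Num 0 then exM a m else (case a of [] \<Rightarrow> False | b # a' \<Rightarrow> b = x \<and> exM a' m))"
  show "exM a (mcons x m)"
  proof (cases "x = Num 0")
    case True
    then obtain ix where "length ix = length a" "sorted_wrt (<) ix" "m = monom_of ix a"
      using h by (auto simp: exM_def)
    then show ?thesis using True unfolding exM_def
      by (intro exI[of _ "map Suc ix"]) (auto simp: monom_of_Suc sorted_wrt_map)
  next
    case False
    then obtain a' where a: "a = x # a'" and e: "exM a' m" using h by (auto split: list.splits)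
    then obtain ix where "length ix = length a'" "sorted_wrt (<) ix" "m = monom_of ix a'"
      by (auto simp: exM_def)
    then show ?thesis using a unfolding exM_def
      by (intro exI[of _ "0 # map Suc ix"]) (auto simp: monom_of_0Suc sorted_wrt_map)
  qed
qed

lemma monom_of_Cons_at: "monom_of (i # ix) (x # a) i = x"
  by (simp add: monom_of_def)

lemma exM_zm: "is_comp a \<Longrightarrow> exM a zm \<longleftrightarrow> a = []"
proof
  assume c: "is_comp a" and e: "exM a zm"
  show "a = []"
  proof (rule ccontr)
    assume "a \<noteq> []"
    then obtain x a' where a: "a = x # a'" by (cases a) auto
    obtain ix where "length ix = length a" "zm = monom_of ix a" using e by (auto simp: exM_def)
    then obtain i ix' where "ix = i # ix'" "zm = monom_of (i # ix') (x # a')" using a by (cases ix) auto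
    then have "zm i = x" using monom_of_Cons_at by metis
    then show False using c a by (simp add: zm_def is_comp_Cons)
  qed
next
  assume "a = []"
  then show "exM a zm" by (auto simp: exM_def monom_of_def zm_def intro!: exI[of _ "[]"])
qed

lemma fin_monom_of: "fin_monom (monom_of ix a)"
proof -
  have "{i. monom_of ix a i \<noteq> Num 0} \<subseteq> set ix"
    by (auto simp: monom_of_def split: option.splits dest: map_of_SomeD set_zip_leftD)
  then show ?thesis unfolding fin_monom_def by (rule finite_subset) simp
qed

lemma exM_fin: "exM a m \<Longrightarrow> fin_monom m"
  by (auto simp: exM_def fin_monom_of)

lemma fin_mcons: "fin_monom (mcons x m) \<longleftrightarrow> fin_monom m"
proof -
  have 1: "{i. mcons x m i \<noteq> Num 0} \<subseteq> insert 0 (Suc ` {i. m i \<noteq> Num 0})"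
  proof
    fix i assume "i \<in> {i. mcons x m i \<noteq> Num 0}"
    then show "i \<in> insert 0 (Suc ` {i. m i \<noteq> Num 0})" by (cases i) auto
  qed
  have 2: "{i. m i \<noteq> Num 0} = Suc -` {i. mcons x m i \<noteq> Num 0}" by auto
  show ?thesis unfolding fin_monom_def
    using 1 2 by (metis finite_imageI finite_insert finite_subset finite_vimageI inj_Suc)
qed

lemma Mfun_mcons:
  assumes "is_comp a"
  shows "Mfun a (mcons x m) = (if x = Num 0 then Mfun a m else (case a of [] \<Rightarrow> 0 | b # a' \<Rightarrow> if b = x then Mfun a' m else 0))"
  using exM_mcons[OF assms] by (auto simp: Mfun_exM split: list.splits)

lemma Mfun_zm: "is_comp a \<Longrightarrow> Mfun a zm = (if a = [] then 1 else 0)"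
  by (simp add: Mfun_exM exM_zm)

lemma Mfun_nonfin: "\<not> fin_monom m \<Longrightarrow> Mfun a m = 0"
  using exM_fin by (auto simp: Mfun_exM)

abbreviation LL :: "(ntilde list \<Rightarrow> 'k::comm_ring_1) \<Rightarrow> 'k series" where
  "LL c \<equiv> lincomb c Mfun"

lemma LL_eq: "LL c m = (\<Sum>a\<in>supp c. c a * Mfun a m)"
  by (simp add: lincomb_def supp_def)

lemma LL_superset: "finite S \<Longrightarrow> supp c \<subseteq> S \<Longrightarrow> LL c m = (\<Sum>a\<in>S. c a * Mfun a m)"
  unfolding LL_eq by (rule sum.mono_neutral_left) (auto simp: supp_def)

lemma LL_lin:
  assumes "finite I" "\<And>i. i \<in> I \<Longrightarrow> finite (supp (F i))"
  shows "LL (\<lambda>w. \<Sum>i\<in>I. c i * F i w) m = (\<Sum>i\<in>I. c i * LL (F i) m)"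
proof -
  define S where "S = (\<Union>i\<in>I. supp (F i))"
  have fS: "finite S" using assms by (simp add: S_def)
  have "supp (\<lambda>w. \<Sum>i\<in>I. c i * F i w) \<subseteq> S"
    unfolding S_def supp_def by (auto intro: ccontr)
  then have "LL (\<lambda>w. \<Sum>i\<in>I. c i * F i w) m = (\<Sum>a\<in>S. (\<Sum>i\<in>I. c i * F i a) * Mfun a m)"
    by (rule LL_superset[OF fS])
  also have "\<dots> = (\<Sum>i\<in>I. c i * (\<Sum>a\<in>S. F i a * Mfun a m))"
    by (simp add: sum_distrib_right sum_distrib_left mult.assoc) (rule sum.swap)
  also have "\<dots> = (\<Sum>i\<in>I. c i * LL (F i) m)"
    by (rule sum.cong[OF refl]) (subst LL_superset[OF fS], auto simp: S_def)
  finally show ?thesis .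
qed

lemma LL_nonfin: "\<not> fin_monom m \<Longrightarrow> LL c m = 0"
  by (simp add: LL_eq Mfun_nonfin)

lemma LL_zm: "valid_coeffs is_comp c \<Longrightarrow> LL c zm = c []"
proof -
  assume v: "valid_coeffs is_comp c"
  have "LL c zm = (\<Sum>a\<in>supp c. if a = [] then c a else 0)"
    unfolding LL_eq using v by (intro sum.cong refl) (auto simp: valid_supp Mfun_zm)
  also have "\<dots> = c []" using v by (simp add: valid_supp sum.delta') (simp add: supp_def)
  finally show ?thesis .
qed

lemma valid_sh: "valid_coeffs is_comp c \<Longrightarrow> valid_coeffs is_comp (sh c p)"
proof -
  assume v: "valid_coeffs is_comp c"
  show ?thesis
  proof (cases "p = Num 0")
    case True then show ?thesis using v by (simp add: sh_def)
  next
    case False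
    have "supp (sh c p) = Cons p -` supp c" using False by (auto simp: sh_def supp_def)
    then have "finite (supp (sh c p))" using v by (auto simp: valid_supp intro: finite_vimageI)
    then show ?thesis using v False by (auto simp: valid_supp sh_def supp_def is_comp_Cons)
  qed
qed

lemma LL_mcons:
  assumes v: "valid_coeffs is_comp c"
  shows "LL c (mcons x m) = LL (sh c x) m"
proof (cases "x = Num 0")
  case True
  then show ?thesis unfolding LL_eq using v
    by (intro sum.cong) (auto simp: sh_def valid_supp Mfun_mcons)
next
  case False
  have fs: "finite (supp c)" using v by (simp add: valid_supp)
  have "LL c (mcons x m) = (\<Sum>a\<in>supp c. c a * (case a of [] \<Rightarrow> 0 | b # a' \<Rightarrow> if b = x then Mfun a' m else 0))"
    unfolding LL_eq using v False by (intro sum.cong refl) (auto simp: valid_supp Mfun_mcons)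
  also have "\<dots> = (\<Sum>a\<in>Cons x ` supp (sh c x). c a * (case a of [] \<Rightarrow> 0 | b # a' \<Rightarrow> if b = x then Mfun a' m else 0))"
    apply (rule sum.mono_neutral_right[OF fs])
    using False apply (auto simp: sh_def supp_def)[1]
    using False apply (auto simp: sh_def supp_def split: list.splits)
    done
  also have "\<dots> = (\<Sum>a\<in>supp (sh c x). c (x # a) * Mfun a m)"
    by (subst sum.reindex) (auto simp: inj_on_def)
  also have "\<dots> = LL (sh c x) m" using False by (simp add: LL_eq sh_def)
  finally show ?thesis .
qed

definition SPL :: "monom \<Rightarrow> (monom \<times> monom) set" where
  "SPL m = {(a, b). fin_monom a \<and> fin_monom b \<and> (\<forall>i. nt_add (a i) (b i) = m i)}"

lemma ser_mult_SPL: "ser_mult f g m = (\<Sum>(a, b)\<in>SPL m. f a * g b)"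
  by (simp add: ser_mult_def SPL_def)

lemma SPL_mcons: "SPL (mcons x m) = (\<lambda>(pq, ab). (mcons (fst pq) (fst ab), mcons (snd pq) (snd ab))) ` (splits x \<times> SPL m)"
proof (rule set_eqI)
  fix ab2 :: "monom \<times> monom"
  obtain a b where ab2: "ab2 = (a, b)" by (cases ab2)
  show "ab2 \<in> SPL (mcons x m) \<longleftrightarrow> ab2 \<in> (\<lambda>(pq, ab). (mcons (fst pq) (fst ab), mcons (snd pq) (snd ab))) ` (splits x \<times> SPL m)"
  proof
    assume h: "ab2 \<in> SPL (mcons x m)"
    have "(a 0, b 0) \<in> splits x" using h ab2 by (auto simp: SPL_def splits_def dest: spec[of _ 0])
    moreover have "((\<lambda>j. a (Suc j)), (\<lambda>j. b (Suc j))) \<in> SPL m"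
    proof -
      have "fin_monom (\<lambda>j. a (Suc j))" "fin_monom (\<lambda>j. b (Suc j))"
        using h ab2 fin_mcons[of "a 0" "\<lambda>j. a (Suc j)"] fin_mcons[of "b 0" "\<lambda>j. b (Suc j)"] mcons_decomp[of a] mcons_decomp[of b]
        by (auto simp: SPL_def)
      moreover have "\<forall>i. nt_add (a (Suc i)) (b (Suc i)) = m i"
        using h ab2 by (auto simp: SPL_def dest: spec[of _ "Suc _"])
      ultimately show ?thesis by (simp add: SPL_def)
    qed
    ultimately show "ab2 \<in> (\<lambda>(pq, ab). (mcons (fst pq) (fst ab), mcons (snd pq) (snd ab))) ` (splits x \<times> SPL m)"
      using ab2 mcons_decomp[of a] mcons_decomp[of b]
      by (intro image_eqI[where x="((a 0, b 0), ((\<lambda>j. a (Suc j)), (\<lambda>j. b (Suc j))))"]) auto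
  next
    assume "ab2 \<in> (\<lambda>(pq, ab). (mcons (fst pq) (fst ab), mcons (snd pq) (snd ab))) ` (splits x \<times> SPL m)"
    then obtain p q a' b' where e: "ab2 = (mcons p a', mcons q b')" and pq: "nt_add p q = x"
      and s: "(a', b') \<in> SPL m" by (auto simp: splits_def)
    have "nt_add (mcons p a' i) (mcons q b' i) = mcons x m i" for i
      using pq s by (cases i) (auto simp: SPL_def)
    then show "ab2 \<in> SPL (mcons x m)" using e s by (auto simp: SPL_def fin_mcons)
  qed
qed

lemma ser_mult_mcons:
  "ser_mult f g (mcons x m) = (\<Sum>pq\<in>splits x. ser_mult (\<lambda>m'. f (mcons (fst pq) m')) (\<lambda>m'. g (mcons (snd pq) m')) m)"
proof -
  have inj: "inj_on (\<lambda>(pq, ab). (mcons (fst pq) (fst ab), mcons (snd pq) (snd ab))) (splits x \<times> SPL m)"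
    by (auto simp: inj_on_def mcons_inj)
  show ?thesis
    unfolding ser_mult_SPL SPL_mcons sum.reindex[OF inj] sum.cartesian_product
    by (rule sum.cong) (auto simp: case_prod_beta)
qed

lemma SPL_zm: "SPL zm = {(zm, zm)}"
proof -
  have "fin_monom zm" by (simp add: fin_monom_def zm_def)
  moreover have "(\<forall>i. nt_add (a i) (b i) = zm i) \<longleftrightarrow> a = zm \<and> b = zm" for a b
    by (auto simp: zm_def nt_add_zero_iff fun_eq_iff)
  ultimately show ?thesis by (auto simp: SPL_def)
qed

lemma SPL_nonfin: "\<not> fin_monom m \<Longrightarrow> SPL m = {}"
proof (rule ccontr)
  assume nf: "\<not> fin_monom m" and "SPL m \<noteq> {}"
  then obtain a b where "fin_monom a" "fin_monom b" "\<forall>i. nt_add (a i) (b i) = m i" by (auto simp: SPL_def)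
  moreover have "{i. m i \<noteq> Num 0} \<subseteq> {i. a i \<noteq> Num 0} \<union> {i. b i \<noteq> Num 0}"
    using calculation by (auto simp: nt_add_zero_iff) (metis nt_add_0l)
  ultimately have "fin_monom m" unfolding fin_monom_def by (auto intro: finite_subset)
  then show False using nf by simp
qed




lemma LL_mult_aux:
  "\<forall>m A B. (\<forall>i\<ge>n. m i = Num 0) \<longrightarrow> valid_coeffs is_comp A \<longrightarrow> valid_coeffs is_comp B
     \<longrightarrow> ser_mult (LL A) (LL B) m = LL (PP A B) m"
proof (induction n)
  case 0
  show ?case
  proof (intro allI impI)
    fix m :: monom and A B :: "ntilde list \<Rightarrow> 'a"
    assume m: "\<forall>i\<ge>0. m i = Num 0" and vA: "valid_coeffs is_comp A" and vB: "valid_coeffs is_comp B"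
    have mz: "m = zm" using m by (auto simp: zm_def)
    show "ser_mult (LL A) (LL B) m = LL (PP A B) m"
      unfolding mz ser_mult_SPL SPL_zm using vA vB valid_PP[OF vA vB]
      by (simp add: LL_zm PP_def is_comp_def)
  qed
next
  case (Suc n)
  show ?case
  proof (intro allI impI)
    fix m :: monom and A B :: "ntilde list \<Rightarrow> 'a"
    assume m: "\<forall>i\<ge>Suc n. m i = Num 0" and vA: "valid_coeffs is_comp A" and vB: "valid_coeffs is_comp B"
    define x where "x = m 0"
    define m' where "m' = (\<lambda>j. m (Suc j))"
    have mm: "m = mcons x m'" unfolding x_def m'_def by (rule mcons_decomp)
    have m': "\<forall>i\<ge>n. m' i = Num 0" using m by (simp add: m'_def)
    have shL: "(\<lambda>m''. LL C (mcons p m'')) = LL (sh C p)" if "valid_coeffs is_comp C" for C :: "ntilde list \<Rightarrow> 'a" and p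
      using that by (intro ext) (simp add: LL_mcons)
    have "ser_mult (LL A) (LL B) m = (\<Sum>pq\<in>splits x. ser_mult (LL (sh A (fst pq))) (LL (sh B (snd pq))) m')"
      unfolding mm ser_mult_mcons using vA vB by (simp add: shL)
    also have "\<dots> = (\<Sum>pq\<in>splits x. LL (PP (sh A (fst pq)) (sh B (snd pq))) m')"
      using Suc.IH m' vA vB by (intro sum.cong refl) (simp add: valid_sh)
    also have "\<dots> = LL (PP A B) m"
    proof (cases "x = Num 0")
      case True
      then show ?thesis unfolding mm using valid_PP[OF vA vB]
        by (simp add: splits_zero LL_mcons sh_def)
    next
      case False
      have sh: "sh (PP A B) x = (\<lambda>w. \<Sum>pq\<in>splits x. 1 * PP (sh A (fst pq)) (sh B (snd pq)) w)"
        using False by (intro ext) (simp add: sh_def PP_def is_comp_Cons)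
      have "LL (PP A B) m = LL (sh (PP A B) x) m'"
        unfolding mm using valid_PP[OF vA vB] by (simp add: LL_mcons)
      also have "\<dots> = (\<Sum>pq\<in>splits x. 1 * LL (PP (sh A (fst pq)) (sh B (snd pq))) m')"
        unfolding sh using vA vB
        by (intro LL_lin finite_splits) (simp add: finite_supp_PP valid_sh)
      finally show ?thesis by simp
    qed
    finally show "ser_mult (LL A) (LL B) m = LL (PP A B) m" .
  qed
qed

lemma LL_mult:
  assumes vA: "valid_coeffs is_comp A" and vB: "valid_coeffs is_comp B"
  shows "ser_mult (LL A) (LL B) = LL (PP A B)"
proof (rule ext)
  fix m
  show "ser_mult (LL A) (LL B) m = LL (PP A B) m"
  proof (cases "fin_monom m")
    case True
    then obtain n where "\<forall>i\<in>{i. m i \<noteq> Num 0}. i < n" unfolding fin_monom_def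
      using finite_nat_set_iff_bounded by blast
    then have "\<forall>i\<ge>n. m i = Num 0" using leD by blast
    then show ?thesis using LL_mult_aux vA vB by blast
  next
    case False
    then show ?thesis by (simp add: ser_mult_SPL SPL_nonfin LL_nonfin)
  qed
qed

lemma LL_foldr:
  "valid_coeffs is_comp c \<Longrightarrow> is_comp g \<Longrightarrow> LL c (foldr mcons g zm) = c g"
proof (induction g arbitrary: c)
  case Nil then show ?case by (simp add: LL_zm)
next
  case (Cons x g)
  then have x0: "x \<noteq> Num 0" and cg: "is_comp g" by (auto simp: is_comp_Cons)
  have "LL c (foldr mcons (x#g) zm) = LL (sh c x) (foldr mcons g zm)"
    using Cons.prems by (simp add: LL_mcons)
  also have "\<dots> = sh c x g" using Cons.IH[OF valid_sh[OF Cons.prems(1)] cg] .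
  finally show ?case using x0 by (simp add: sh_def)
qed

lemma LL_inj:
  assumes "valid_coeffs is_comp c" "valid_coeffs is_comp d" "LL c = LL d"
  shows "c = d"
proof (rule ext)
  fix g
  show "c g = d g"
  proof (cases "is_comp g")
    case True
    then show ?thesis using LL_foldr[OF assms(1) True] LL_foldr[OF assms(2) True] assms(3) by simp
  next
    case False
    then show ?thesis using assms(1,2) unfolding valid_coeffs_def by metis
  qed
qed

lemma phi_LL:
  assumes v: "valid_coeffs is_comp c"
  shows "phi (LL c) = lincomb c phiM"
proof -
  have "\<exists>c'. valid_coeffs is_comp c' \<and> LL c = LL c'" using v by blast
  then have "valid_coeffs is_comp (SOME c'. valid_coeffs is_comp c' \<and> LL c = LL c') \<and>
      LL c = LL (SOME c'. valid_coeffs is_comp c' \<and> LL c = LL c')" by (rule someI_ex)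
  then have "(SOME c'. valid_coeffs is_comp c' \<and> LL c = LL c') = c"
    using LL_inj[OF _ v, of "SOME c'. valid_coeffs is_comp c' \<and> LL c = LL c'"] by simp
  then show ?thesis by (simp add: phi_def)
qed

lemma supp_Phi: "supp (Phi c) \<subseteq> bar ` supp c"
proof
  fix d assume "d \<in> supp (Phi c)"
  then have "(\<Sum>a\<in>supp c. c a * phic a d) \<noteq> 0" by (simp add: supp_def Phi_def)
  then obtain a where a: "a \<in> supp c" "c a * phic a d \<noteq> 0"
    by (rule sum.not_neutral_contains_not_neutral)
  then have "phic a d \<noteq> (0::'a)" by auto
  then have "d = bar a" unfolding phic_def by (simp split: if_split_asm)
  then show "d \<in> bar ` supp c" using a(1) by blast
qed

lemma valid_Phi: "valid_coeffs is_comp c \<Longrightarrow> valid_coeffs is_qcomp (Phi c)"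
proof -
  assume v: "valid_coeffs is_comp c"
  have f: "finite (supp (Phi c))" using v by (simp add: valid_supp finite_supp_Phi)
  have "is_qcomp d" if dS: "d \<in> supp (Phi c)" for d
  proof -
    obtain a where a: "a \<in> supp c" "d = bar a" using supp_Phi dS by blast
    have "is_comp a" using v a(1) by (simp add: valid_supp)
    then show ?thesis unfolding a(2) is_qcomp_def is_comp_def bar_def by simp
  qed
  then show ?thesis using f unfolding valid_coeffs_def supp_def by blast
qed

lemma valid_q_c: "valid_coeffs is_qcomp c \<Longrightarrow> valid_coeffs is_comp c"
  by (auto simp: valid_coeffs_def is_qcomp_def)

lemma phi_LL_Phi:
  assumes v: "valid_coeffs is_comp c"
  shows "phi (LL c) = LL (Phi c)"
proof (rule ext)
  fix m
  have fs: "finite (supp c)" using v by (simp add: valid_supp)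
  define S where "S = bar ` supp c"
  have fS: "finite S" using fs by (simp add: S_def)
  have inner: "(\<Sum>d\<in>S. phic a d * Mfun d m) = phiM a m" if "a \<in> supp c" for a
  proof -
    have "(\<Sum>d\<in>S. phic a d * Mfun d m) = (\<Sum>d\<in>S. if d = bar a then sg a * Mfun (bar a) m else 0)"
      by (intro sum.cong refl) (auto simp: phic_ee ee_def)
    also have "\<dots> = sg a * Mfun (bar a) m" using that fS by (simp add: sum.delta' S_def)
    also have "\<dots> = phiM a m" by (simp add: sg_def phiM_def ser_smult_def)
    finally show ?thesis .
  qed
  have "LL (Phi c) m = (\<Sum>d\<in>S. Phi c d * Mfun d m)"
    using supp_Phi by (intro LL_superset fS) (simp add: S_def)
  also have "\<dots> = (\<Sum>d\<in>S. (\<Sum>a\<in>supp c. c a * phic a d) * Mfun d m)" by (simp add: Phi_def)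
  also have "\<dots> = (\<Sum>a\<in>supp c. c a * (\<Sum>d\<in>S. phic a d * Mfun d m))"
    by (simp add: sum_distrib_right sum_distrib_left mult.assoc) (rule sum.swap)
  also have "\<dots> = (\<Sum>a\<in>supp c. c a * phiM a m)" by (intro sum.cong refl) (simp add: inner)
  also have "\<dots> = lincomb c phiM m" by (simp add: lincomb_def supp_def)
  also have "\<dots> = phi (LL c) m" by (simp only: phi_LL[OF v])
  finally show "phi (LL c) m = LL (Phi c) m" by simp
qed

lemma LL_add:
  assumes "finite (supp c)" "finite (supp d)"
  shows "ser_add (LL c) (LL d) = LL (\<lambda>w. c w + d w)"
proof (rule ext)
  fix m
  define S where "S = supp c \<union> supp d"
  have fS: "finite S" using assms by (simp add: S_def)
  have "LL (\<lambda>w. c w + d w) m = (\<Sum>a\<in>S. (c a + d a) * Mfun a m)"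
    using supp_add[of c d] by (intro LL_superset fS) (auto simp: S_def)
  also have "\<dots> = LL c m + LL d m"
    by (simp add: distrib_right sum.distrib LL_superset[OF fS] S_def)
  finally show "ser_add (LL c) (LL d) m = LL (\<lambda>w. c w + d w) m" by (simp add: ser_add_def)
qed

lemma valid_add: "valid_coeffs P c \<Longrightarrow> valid_coeffs P d \<Longrightarrow> valid_coeffs P (\<lambda>w. c w + d w)"
proof -
  assume vc: "valid_coeffs P c" and vd: "valid_coeffs P d"
  have "{w. c w + d w \<noteq> 0} \<subseteq> {w. c w \<noteq> 0} \<union> {w. d w \<noteq> 0}" by (auto intro: ccontr)
  then show ?thesis using vc vd unfolding valid_coeffs_def by (auto intro: finite_subset)
qed

lemma LL_smult:
  assumes "finite (supp c)"
  shows "ser_smult k (LL c) = LL (\<lambda>w. k * c w)"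
proof (rule ext)
  fix m
  have "LL (\<lambda>w. k * c w) m = (\<Sum>a\<in>supp c. (k * c a) * Mfun a m)"
    by (intro LL_superset assms) (auto simp: supp_def)
  also have "\<dots> = k * LL c m" by (simp add: LL_eq sum_distrib_left mult.assoc)
  finally show "ser_smult k (LL c) m = LL (\<lambda>w. k * c w) m" by (simp add: ser_smult_def)
qed

lemma valid_smult: "valid_coeffs P c \<Longrightarrow> valid_coeffs P (\<lambda>w. k * c w)"
proof -
  assume vc: "valid_coeffs P c"
  have "{w. k * c w \<noteq> 0} \<subseteq> {w. c w \<noteq> 0}" by auto
  then show ?thesis using vc unfolding valid_coeffs_def by (auto intro: finite_subset)
qed

lemma Phi_smult: "finite (supp c) \<Longrightarrow> Phi (\<lambda>w. k * c w) = (\<lambda>d. k * Phi c d)"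
proof (rule ext)
  fix d assume f: "finite (supp c)"
  have "Phi (\<lambda>w. k * c w) d = (\<Sum>a\<in>supp c. (k * c a) * phic a d)"
    by (intro Phi_superset f) (auto simp: supp_def)
  also have "\<dots> = k * Phi c d" by (simp add: Phi_def sum_distrib_left mult.assoc)
  finally show "Phi (\<lambda>w. k * c w) d = k * Phi c d" .
qed

lemma ser_one_LL: "(ser_one :: 'k::comm_ring_1 series) = LL (ee [])"
proof (rule ext)
  fix m
  have "LL (ee []) m = (Mfun [] m :: 'k)" by (simp add: LL_eq supp_ee) (simp add: ee_def)
  also have "\<dots> = (ser_one m :: 'k)" by (simp add: Mfun_def ser_one_def monom_of_def)
  finally show "(ser_one m :: 'k) = LL (ee []) m" by simp
qed

lemma valid_ee: "is_comp a \<Longrightarrow> valid_coeffs is_comp (ee a)"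
  by (simp add: valid_supp supp_ee)

lemma is_comp_Nil: "is_comp []"
  by (simp add: is_comp_def)

lemma Phi_ee_Nil: "(Phi (ee []) :: _ \<Rightarrow> 'k::comm_ring_1) = ee []"
proof (rule ext)
  fix d
  show "(Phi (ee []) d :: 'k) = ee [] d"
    by (simp only: Phi_ee) (simp add: phic_def ee_def bar_def eps_len_def in_C_eps_def)
qed

theorem lemma3p6:
  fixes dummy :: "'k::comm_ring_1"
  assumes Q_in_k: "\<And>n::nat. n > 0 \<Longrightarrow> \<exists>y::'k. of_nat n * y = 1"
  shows "phi ` (WCQSym :: 'k series set) \<subseteq> QSym
    \<and> (\<forall>f \<in> (WCQSym :: 'k series set). \<forall>g \<in> WCQSym. phi (ser_add f g) = ser_add (phi f) (phi g))
    \<and> (\<forall>c::'k. \<forall>f \<in> (WCQSym :: 'k series set). phi (ser_smult c f) = ser_smult c (phi f))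
    \<and> (\<forall>f \<in> (WCQSym :: 'k series set). \<forall>g \<in> WCQSym. phi (ser_mult f g) = ser_mult (phi f) (phi g))
    \<and> phi (ser_one :: 'k series) = ser_one"
proof (intro conjI ballI allI)
  show "phi ` (WCQSym :: 'k series set) \<subseteq> QSym"
  proof
    fix h assume "h \<in> phi ` (WCQSym :: 'k series set)"
    then obtain c :: "ntilde list \<Rightarrow> 'k" where v: "valid_coeffs is_comp c" and h: "h = phi (LL c)"
      by (auto simp: WCQSym_def)
    show "h \<in> QSym" unfolding h phi_LL_Phi[OF v] QSym_def using valid_Phi[OF v] by blast
  qed
next
  fix f g :: "'k series" assume "f \<in> WCQSym" "g \<in> WCQSym"
  then obtain c d :: "ntilde list \<Rightarrow> 'k" where vc: "valid_coeffs is_comp c" and vd: "valid_coeffs is_comp d"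
    and f: "f = LL c" and g: "g = LL d" by (auto simp: WCQSym_def)
  have fc: "finite (supp c)" "finite (supp d)" using vc vd by (auto simp: valid_supp)
  have fP: "finite (supp (Phi c))" "finite (supp (Phi d))" using fc by (auto simp: finite_supp_Phi)
  show "phi (ser_add f g) = ser_add (phi f) (phi g)"
    unfolding f g LL_add[OF fc] phi_LL_Phi[OF valid_add[OF vc vd]] phi_LL_Phi[OF vc] phi_LL_Phi[OF vd]
      LL_add[OF fP] using Phi_add[OF fc] by presburger
  show "phi (ser_mult f g) = ser_mult (phi f) (phi g)"
    unfolding f g LL_mult[OF vc vd] phi_LL_Phi[OF valid_PP[OF vc vd]] phi_LL_Phi[OF vc] phi_LL_Phi[OF vd]
      LL_mult[OF valid_q_c[OF valid_Phi[OF vc]] valid_q_c[OF valid_Phi[OF vd]]] Phi_mult[OF vc vd] ..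
next
  fix k :: 'k and f :: "'k series" assume "f \<in> WCQSym"
  then obtain c :: "ntilde list \<Rightarrow> 'k" where vc: "valid_coeffs is_comp c" and f: "f = LL c"
    by (auto simp: WCQSym_def)
  have fc: "finite (supp c)" using vc by (auto simp: valid_supp)
  show "phi (ser_smult k f) = ser_smult k (phi f)"
    unfolding f LL_smult[OF fc] phi_LL_Phi[OF valid_smult[OF vc]] phi_LL_Phi[OF vc] Phi_smult[OF fc]
      LL_smult[OF finite_supp_Phi[OF fc]] ..
next
  show "phi (ser_one :: 'k series) = ser_one"
    unfolding ser_one_LL phi_LL_Phi[OF valid_ee[OF is_comp_Nil]] Phi_ee_Nil ..
qed

end
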